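(* The projectors $\hat P_g$, $g\in G$, onto the isotypes of $\hat U$ satisfy the Knill–Laflamme condition diagonally: $\Pi_{\rm pn}\hat P_g\hat P_{g'}\Pi_{\rm pn}=\frac1{2^{n-k}}\delta_{g,g'}\Pi_{\rm pn}$ for all $g,g'\in G$.
   Context: Let $n\ge1$, $0\le k<n$, $\mathcal{H}_{\rm kin}=(\mathbb{C}^2)^{\otimes n}$, $G=\mathbb{Z}_2^{\times(n-k)}$, and $U:G\to\mathcal{P}_n$, $g\mapsto U^g$, a faithful unitary representation into the $n$-qubit Pauli group with $-I\notin U(G)$ (stabilizer code); $\Pi_{\rm pn}=\frac1{|G|}\sum_gU^g$ is the projector onto the code space. $\hat G$ is the group of characters $\chi:G\to\{\pm1\}$. Let $\hat U:\hat G\to\mathrm{Aut}(\mathcal{H}_{\rm kin})$, $\chi\mapsto\hat U^\chi$, be a unitary representation dual to $U$, i.e. $U^g\hat U^\chi=\chi(g)\hat U^\chi U^g$ for all $g,\chi$, and for $g\in G$ let $\hat P_g=\frac1{2^{n-k}}\sum_{\chi\in\hat G}\chi(g)\hat U^\chi$ (the orthogonal projector onto the isotype of $\hat U$ labeled by $g$). *)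

theory Defs
  imports Complex_Main
begin

text \<open>Operators on C^N are represented as functions nat => nat => complex
  (matrix entries), with all entries outside {0..<N} x {0..<N} irrelevant/zero.\<close>

type_synonym op = "nat \<Rightarrow> nat \<Rightarrow> complex"

definition mmul :: "nat \<Rightarrow> op \<Rightarrow> op \<Rightarrow> op" where
  "mmul N A B = (\<lambda>i j. \<Sum>l<N. A i l * B l j)"

definition idop :: "nat \<Rightarrow> op" where
  "idop N = (\<lambda>i j. if i < N \<and> j = i then 1 else 0)"

definition adj :: "op \<Rightarrow> op" where
  "adj A = (\<lambda>i j. cnj (A j i))"

definition scl :: "complex \<Rightarrow> op \<Rightarrow> op" where
  "scl c A = (\<lambda>i j. c * A i j)"

definition is_op :: "nat \<Rightarrow> op \<Rightarrow> bool" where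
  "is_op N A \<longleftrightarrow> (\<forall>i j. (N \<le> i \<or> N \<le> j) \<longrightarrow> A i j = 0)"

definition unitary_op :: "nat \<Rightarrow> op \<Rightarrow> bool" where
  "unitary_op N A \<longleftrightarrow> is_op N A \<and> mmul N (adj A) A = idop N \<and> mmul N A (adj A) = idop N"

text \<open>Computational basis of (C^2)^{tensor n}: basis vector |s>, s < 2^n, whose
  j-th qubit is the j-th bit of s.\<close>

definition bits :: "nat \<Rightarrow> nat \<Rightarrow> nat set" where
  "bits n s = {j. j < n \<and> bit s j}"

definition symd :: "'a set \<Rightarrow> 'a set \<Rightarrow> 'a set" where
  "symd A B = (A - B) \<union> (B - A)"

text \<open>The n-qubit Pauli operator  i^c X^a Z^b  (X on the qubits in a, Z on the qubits in b).\<close>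

definition pauli :: "nat \<Rightarrow> nat set \<Rightarrow> nat set \<Rightarrow> nat \<Rightarrow> op" where
  "pauli n a b c = (\<lambda>r s. if r < 2^n \<and> s < 2^n \<and> bits n r = symd (bits n s) a
       then \<i> ^ c * (-1) ^ card (b \<inter> bits n s) else 0)"

definition pauli_group :: "nat \<Rightarrow> op set" where
  "pauli_group n = {pauli n a b c | a b c. a \<subseteq> {..<n} \<and> b \<subseteq> {..<n}}"

text \<open>The group Z_2^m, realised as subsets of {0..<m} under symmetric difference.\<close>

definition Gc :: "nat \<Rightarrow> nat set set" where
  "Gc m = Pow {..<m}"

text \<open>Its character group: homomorphisms to {1,-1} (extensional: 0 outside the carrier);
  the group operation is pointwise multiplication.\<close>

definition chars :: "nat \<Rightarrow> (nat set \<Rightarrow> complex) set" where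
  "chars m = {\<chi>. (\<forall>g\<in>Gc m. \<chi> g = 1 \<or> \<chi> g = -1)
                 \<and> (\<forall>g\<in>Gc m. \<forall>h\<in>Gc m. \<chi> (symd g h) = \<chi> g * \<chi> h)
                 \<and> (\<forall>g. g \<notin> Gc m \<longrightarrow> \<chi> g = 0)}"

definition code_proj :: "nat \<Rightarrow> nat \<Rightarrow> (nat set \<Rightarrow> op) \<Rightarrow> op" where
  "code_proj n m U = (\<lambda>i j. (1 / 2 ^ m) * (\<Sum>h\<in>Gc m. U h i j))"

definition iso_proj :: "nat \<Rightarrow> nat \<Rightarrow> ((nat set \<Rightarrow> complex) \<Rightarrow> op) \<Rightarrow> nat set \<Rightarrow> op" where
  "iso_proj n m Uh g = (\<lambda>i j. (1 / 2 ^ m) * (\<Sum>\<chi>\<in>chars m. \<chi> g * Uh \<chi> i j))"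

end

theory Submission imports Defs "HOL-Library.FuncSet" begin

definition opsum :: "'a set \<Rightarrow> ('a \<Rightarrow> op) \<Rightarrow> op" where
  "opsum S f = (\<lambda>i j. \<Sum>x\<in>S. f x i j)"

definition zop :: op where "zop = (\<lambda>i j. 0)"

lemma mmul_assoc: "mmul N (mmul N A B) C = mmul N A (mmul N B C)"
  unfolding mmul_def
  by (auto simp: sum_distrib_left sum_distrib_right mult.assoc intro!: ext sum.swap[THEN trans] sum.cong)

lemma mmul_opsum_left: "mmul N (opsum S f) B = opsum S (\<lambda>x. mmul N (f x) B)"
  unfolding mmul_def opsum_def
  by (auto simp: sum_distrib_right intro!: ext sum.swap)

lemma mmul_opsum_right: "mmul N A (opsum S f) = opsum S (\<lambda>x. mmul N A (f x))"
  unfolding mmul_def opsum_def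
  by (auto simp: sum_distrib_left intro!: ext sum.swap)

lemma mmul_scl_left: "mmul N (scl c A) B = scl c (mmul N A B)"
  unfolding mmul_def scl_def by (auto simp: sum_distrib_left mult.assoc intro!: ext)

lemma mmul_scl_right: "mmul N A (scl c B) = scl c (mmul N A B)"
  unfolding mmul_def scl_def by (auto simp: sum_distrib_left mult.left_commute intro!: ext)

lemma scl_scl: "scl a (scl b A) = scl (a * b) A"
  unfolding scl_def by (auto simp: mult.assoc)

lemma scl_opsum: "scl c (opsum S f) = opsum S (\<lambda>x. scl c (f x))"
  unfolding scl_def opsum_def by (auto simp: sum_distrib_left)

lemma opsum_scl_const: "opsum S (\<lambda>x. scl (c x) A) = scl (\<Sum>x\<in>S. c x) A"
  unfolding scl_def opsum_def by (auto simp: sum_distrib_right)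

lemma opsum_cong: "(\<And>x. x \<in> S \<Longrightarrow> f x = g x) \<Longrightarrow> opsum S f = opsum S g"
  unfolding opsum_def by (auto intro!: ext sum.cong)

lemma opsum_reindex: "bij_betw h S S \<Longrightarrow> opsum S (\<lambda>x. f (h x)) = opsum S f"
  unfolding opsum_def by (auto intro!: ext sum.reindex_bij_betw)

lemma mmul_id_left: "is_op N A \<Longrightarrow> mmul N (idop N) A = A"
proof (rule ext, rule ext)
  fix i j assume "is_op N A"
  then have z: "N \<le> i \<Longrightarrow> A i j = 0" unfolding is_op_def by auto
  have "mmul N (idop N) A i j = (\<Sum>l<N. if l = i then (if i < N then A i j else 0) else 0)"
    unfolding mmul_def idop_def by (rule sum.cong) auto
  also have "\<dots> = A i j" using z by (auto simp: sum.delta)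
  finally show "mmul N (idop N) A i j = A i j" .
qed

lemma mmul_id_right: "is_op N A \<Longrightarrow> mmul N A (idop N) = A"
proof (rule ext, rule ext)
  fix i j assume "is_op N A"
  then have z: "N \<le> j \<Longrightarrow> A i j = 0" unfolding is_op_def by auto
  have "mmul N A (idop N) i j = (\<Sum>l<N. if l = j then (if j < N then A i j else 0) else 0)"
    unfolding mmul_def idop_def by (rule sum.cong) auto
  also have "\<dots> = A i j" using z by (auto simp: sum.delta)
  finally show "mmul N A (idop N) i j = A i j" .
qed

lemma scl_zero: "scl 0 A = zop" unfolding scl_def zop_def by simp
lemma scl_zop: "scl c zop = zop" unfolding scl_def zop_def by simp
lemma scl_one: "scl 1 A = A" unfolding scl_def by simp

definition triv :: "nat \<Rightarrow> nat set \<Rightarrow> complex" where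
  "triv m = (\<lambda>h. if h \<in> Gc m then 1 else 0)"

lemma symd_empty[simp]: "symd {} {} = {}" "symd h {} = h" "symd {} h = h" "symd h h = {}"
  unfolding symd_def by auto

lemma symd_invol: "symd (symd h a) a = h" "symd a (symd a h) = h"
  unfolding symd_def by auto

lemma symd_Gc: "g \<in> Gc m \<Longrightarrow> h \<in> Gc m \<Longrightarrow> symd g h \<in> Gc m"
  unfolding symd_def Gc_def by auto

lemma empty_Gc: "{} \<in> Gc m" unfolding Gc_def by auto

lemma card_Gc: "card (Gc m) = 2 ^ m" unfolding Gc_def by (simp add: card_Pow)
lemma finite_Gc: "finite (Gc m)" unfolding Gc_def by simp

lemma chars_pm: "\<chi> \<in> chars m \<Longrightarrow> g \<in> Gc m \<Longrightarrow> \<chi> g = 1 \<or> \<chi> g = -1"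
  unfolding chars_def by auto
lemma chars_mult: "\<chi> \<in> chars m \<Longrightarrow> g \<in> Gc m \<Longrightarrow> h \<in> Gc m \<Longrightarrow> \<chi> (symd g h) = \<chi> g * \<chi> h"
  unfolding chars_def by auto
lemma chars_out: "\<chi> \<in> chars m \<Longrightarrow> g \<notin> Gc m \<Longrightarrow> \<chi> g = 0"
  unfolding chars_def by auto

lemma chars_sq: "\<chi> \<in> chars m \<Longrightarrow> \<chi> g * \<chi> g = triv m g"
  using chars_pm[of \<chi> m g] chars_out[of \<chi> m g] unfolding triv_def by auto

lemma chars_empty: "\<chi> \<in> chars m \<Longrightarrow> \<chi> {} = 1"
  using chars_mult[of \<chi> m "{}" "{}", OF _ empty_Gc empty_Gc] chars_pm[of \<chi> m "{}", OF _ empty_Gc]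
  by auto

lemma triv_chars: "triv m \<in> chars m"
  unfolding chars_def triv_def by (auto simp: symd_Gc)

lemma chars_prod: "\<chi> \<in> chars m \<Longrightarrow> \<psi> \<in> chars m \<Longrightarrow> (\<lambda>h. \<chi> h * \<psi> h) \<in> chars m"
proof -
  assume a: "\<chi> \<in> chars m" "\<psi> \<in> chars m"
  show ?thesis unfolding chars_def
  proof (intro CollectI conjI ballI allI impI)
    fix g assume "g \<in> Gc m" then show "\<chi> g * \<psi> g = 1 \<or> \<chi> g * \<psi> g = -1"
      using chars_pm[OF a(1) \<open>g \<in> Gc m\<close>] chars_pm[OF a(2) \<open>g \<in> Gc m\<close>] by auto
  next
    fix g h assume "g \<in> Gc m" "h \<in> Gc m"
    then show "\<chi> (symd g h) * \<psi> (symd g h) = \<chi> g * \<psi> g * (\<chi> h * \<psi> h)"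
      using chars_mult[OF a(1)] chars_mult[OF a(2)] by (simp add: algebra_simps)
  next
    fix g assume "g \<notin> Gc m" then show "\<chi> g * \<psi> g = 0" using chars_out[OF a(1)] by simp
  qed
qed

lemma chars_prod_triv: "\<chi> \<in> chars m \<Longrightarrow> \<psi> \<in> chars m \<Longrightarrow> ((\<lambda>h. \<chi> h * \<psi> h) = triv m) \<longleftrightarrow> \<psi> = \<chi>"
proof
  assume a: "\<chi> \<in> chars m" "\<psi> \<in> chars m" and e: "(\<lambda>h. \<chi> h * \<psi> h) = triv m"
  show "\<psi> = \<chi>"
  proof
    fix h show "\<psi> h = \<chi> h"
    proof (cases "h \<in> Gc m")
      case True
      then have "\<chi> h * \<psi> h = 1" using fun_cong[OF e, of h] unfolding triv_def by simp
      then show ?thesis using chars_pm[OF a(1) True] chars_pm[OF a(2) True] by auto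
    next
      case False then show ?thesis using chars_out a by metis
    qed
  qed
next
  assume a: "\<chi> \<in> chars m" "\<psi> \<in> chars m" and "\<psi> = \<chi>"
  then show "(\<lambda>h. \<chi> h * \<psi> h) = triv m" using chars_sq[OF a(1)] by auto
qed

lemma finite_chars: "finite (chars m)"
proof -
  have "inj_on (\<lambda>\<chi>. restrict \<chi> (Gc m)) (chars m)"
  proof (rule inj_onI)
    fix \<chi> \<psi> assume a: "\<chi> \<in> chars m" "\<psi> \<in> chars m" and e: "restrict \<chi> (Gc m) = restrict \<psi> (Gc m)"
    show "\<chi> = \<psi>"
    proof
      fix h
      have "restrict \<chi> (Gc m) h = restrict \<psi> (Gc m) h" using e by simp
      then show "\<chi> h = \<psi> h"
        using chars_out[OF a(1), of h] chars_out[OF a(2), of h]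
        by (auto split: if_splits)
    qed
  qed
  moreover have "(\<lambda>\<chi>. restrict \<chi> (Gc m)) ` chars m \<subseteq> PiE (Gc m) (\<lambda>_. {1, -1})"
  proof
    fix f assume "f \<in> (\<lambda>\<chi>. restrict \<chi> (Gc m)) ` chars m"
    then obtain \<chi> where "\<chi> \<in> chars m" "f = restrict \<chi> (Gc m)" by auto
    then show "f \<in> PiE (Gc m) (\<lambda>_. {1, -1})" using chars_pm[of \<chi> m] by auto
  qed
  moreover have "finite (PiE (Gc m) (\<lambda>_. {1::complex, -1}))"
    by (rule finite_PiE) (auto simp: finite_Gc)
  ultimately show ?thesis by (metis finite_imageD finite_subset)
qed

lemma sum_Gc_char: "\<chi> \<in> chars m \<Longrightarrow> (\<Sum>h\<in>Gc m. \<chi> h) = (if \<chi> = triv m then 2 ^ m else 0)"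
proof (cases "\<chi> = triv m")
  case True then show ?thesis by (simp add: triv_def card_Gc)
next
  case False
  assume a: "\<chi> \<in> chars m"
  have "\<exists>h0\<in>Gc m. \<chi> h0 \<noteq> 1"
  proof (rule ccontr)
    assume "\<not> ?thesis"
    then have "\<chi> = triv m" using chars_out[OF a] unfolding triv_def by auto
    with False show False by simp
  qed
  then obtain h0 where h0: "h0 \<in> Gc m" "\<chi> h0 = -1" using chars_pm[OF a] by blast
  have b: "bij_betw (\<lambda>h. symd h h0) (Gc m) (Gc m)"
    by (rule bij_betw_byWitness[where f'="\<lambda>h. symd h h0"]) (auto simp: symd_Gc h0 symd_invol)
  have "(\<Sum>h\<in>Gc m. \<chi> h) = (\<Sum>h\<in>Gc m. \<chi> (symd h h0))"
    using sum.reindex_bij_betw[OF b, of \<chi>] by simp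
  also have "\<dots> = (\<Sum>h\<in>Gc m. - \<chi> h)"
    by (rule sum.cong) (auto simp: chars_mult[OF a] h0)
  finally have "(\<Sum>h\<in>Gc m. \<chi> h) = 0" by (simp add: sum_negf)
  with False show ?thesis by simp
qed

lemma sum_chars_el: "d \<in> Gc m \<Longrightarrow> d \<noteq> {} \<Longrightarrow> (\<Sum>\<chi>\<in>chars m. \<chi> d) = 0"
proof -
  assume d: "d \<in> Gc m" "d \<noteq> {}"
  then obtain j where j: "j \<in> d" by auto
  define c0 where "c0 = (\<lambda>h. if h \<in> Gc m then (if j \<in> h then -1 else 1) else (0::complex))"
  have c0: "c0 \<in> chars m" unfolding chars_def c0_def
  proof (intro CollectI conjI ballI allI impI)
    fix g h assume "g \<in> Gc m" "h \<in> Gc m"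
    moreover have "j \<in> symd g h \<longleftrightarrow> \<not> (j \<in> g \<longleftrightarrow> j \<in> h)" unfolding symd_def by auto
    ultimately show "(if symd g h \<in> Gc m then if j \<in> symd g h then - 1 else 1 else 0) =
       (if g \<in> Gc m then if j \<in> g then - 1 else 1 else 0) * (if h \<in> Gc m then if j \<in> h then - 1 else 1 else (0::complex))"
      by (auto simp: symd_Gc)
  qed auto
  have c0d: "c0 d = -1" using d j unfolding c0_def by auto
  have b: "bij_betw (\<lambda>\<chi>. (\<lambda>h. \<chi> h * c0 h)) (chars m) (chars m)"
  proof (rule bij_betw_byWitness[where f'="\<lambda>\<chi>. (\<lambda>h. \<chi> h * c0 h)"])
    show "(\<lambda>\<chi> h. \<chi> h * c0 h) ` chars m \<subseteq> chars m" using chars_prod[OF _ c0] by auto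
    show "(\<lambda>\<chi> h. \<chi> h * c0 h) ` chars m \<subseteq> chars m" using chars_prod[OF _ c0] by auto
  next
    have inv: "(\<lambda>h. \<chi> h * c0 h * c0 h) = \<chi>" if a: "\<chi> \<in> chars m" for \<chi>
    proof
      fix h show "\<chi> h * c0 h * c0 h = \<chi> h"
        using chars_sq[OF c0, of h] chars_out[OF a, of h] unfolding triv_def
        by (auto simp: mult.assoc)
    qed
    then show "\<forall>a\<in>chars m. (\<lambda>h. (\<lambda>h. a h * c0 h) h * c0 h) = a" by simp
    from inv show "\<forall>a\<in>chars m. (\<lambda>h. (\<lambda>h. a h * c0 h) h * c0 h) = a" by simp
  qed
  have "(\<Sum>\<chi>\<in>chars m. \<chi> d) = (\<Sum>\<chi>\<in>chars m. (\<lambda>h. \<chi> h * c0 h) d)"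
    using sum.reindex_bij_betw[OF b, of "\<lambda>\<chi>. \<chi> d"] by simp
  also have "\<dots> = (\<Sum>\<chi>\<in>chars m. - \<chi> d)" by (simp add: c0d)
  finally show ?thesis by (simp add: sum_negf)
qed

lemma card_chars: "(of_nat (card (chars m)) :: complex) = 2 ^ m"
proof -
  have "(\<Sum>g\<in>Gc m. \<Sum>\<chi>\<in>chars m. \<chi> g) = (\<Sum>g\<in>Gc m. if g = {} then of_nat (card (chars m)) else 0)"
  proof (rule sum.cong)
    fix g assume g: "g \<in> Gc m"
    show "(\<Sum>\<chi>\<in>chars m. \<chi> g) = (if g = {} then of_nat (card (chars m)) else 0)"
    proof (cases "g = {}")
      case True
      then have "(\<Sum>\<chi>\<in>chars m. \<chi> g) = (\<Sum>\<chi>\<in>chars m. 1)" by (intro sum.cong) (auto simp: chars_empty)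
      then show ?thesis using True by simp
    qed (use sum_chars_el[OF g] in auto)
  qed simp
  also have "\<dots> = of_nat (card (chars m))" using empty_Gc finite_Gc by (simp add: sum.delta)
  finally have 1: "(\<Sum>g\<in>Gc m. \<Sum>\<chi>\<in>chars m. \<chi> g) = of_nat (card (chars m))" .
  have "(\<Sum>g\<in>Gc m. \<Sum>\<chi>\<in>chars m. \<chi> g) = (\<Sum>\<chi>\<in>chars m. \<Sum>g\<in>Gc m. \<chi> g)"
    by (rule sum.swap)
  also have "\<dots> = (\<Sum>\<chi>\<in>chars m. if \<chi> = triv m then 2 ^ m else 0)"
    by (rule sum.cong) (auto simp: sum_Gc_char)
  also have "\<dots> = 2 ^ m" using triv_chars finite_chars by (simp add: sum.delta)
  finally show ?thesis using 1 by simp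
qed



lemma code_proj_eq: "code_proj n m U = scl (1 / 2 ^ m) (opsum (Gc m) U)"
  unfolding code_proj_def scl_def opsum_def by simp

lemma iso_proj_eq: "iso_proj n m Uh g = scl (1 / 2 ^ m) (opsum (chars m) (\<lambda>\<chi>. scl (\<chi> g) (Uh \<chi>)))"
  unfolding iso_proj_def scl_def opsum_def by simp

lemma pauli_is_op: "A \<in> pauli_group n \<Longrightarrow> is_op (2^n) A"
  unfolding pauli_group_def pauli_def is_op_def by auto

lemma is_op_scl_opsum: "(\<And>x. x \<in> S \<Longrightarrow> is_op N (f x)) \<Longrightarrow> is_op N (scl c (opsum S f))"
  unfolding is_op_def scl_def opsum_def by auto

theorem mainTheorem15:
  fixes n k :: nat
    and U :: "nat set \<Rightarrow> op"
    and Uh :: "(nat set \<Rightarrow> complex) \<Rightarrow> op"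
    and g g' :: "nat set"
  assumes "1 \<le> n" and "k < n"
    and U_pauli: "\<forall>h\<in>Gc (n - k). U h \<in> pauli_group n"
    and U_hom: "\<forall>h1\<in>Gc (n - k). \<forall>h2\<in>Gc (n - k). U (symd h1 h2) = mmul (2^n) (U h1) (U h2)"
    and U_faithful: "inj_on U (Gc (n - k))"
    and U_stab: "\<forall>h\<in>Gc (n - k). U h \<noteq> scl (-1) (idop (2^n))"
    and Uh_unitary: "\<forall>\<chi>\<in>chars (n - k). unitary_op (2^n) (Uh \<chi>)"
    and Uh_hom: "\<forall>\<chi>\<in>chars (n - k). \<forall>\<psi>\<in>chars (n - k).
                   Uh (\<lambda>h. \<chi> h * \<psi> h) = mmul (2^n) (Uh \<chi>) (Uh \<psi>)"
    and dual: "\<forall>h\<in>Gc (n - k). \<forall>\<chi>\<in>chars (n - k).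
                 mmul (2^n) (U h) (Uh \<chi>) = scl (\<chi> h) (mmul (2^n) (Uh \<chi>) (U h))"
    and "g \<in> Gc (n - k)" and "g' \<in> Gc (n - k)"
  shows "mmul (2^n) (code_proj n (n - k) U)
           (mmul (2^n) (iso_proj n (n - k) Uh g)
             (mmul (2^n) (iso_proj n (n - k) Uh g') (code_proj n (n - k) U)))
         = scl (if g = g' then 1 / 2 ^ (n - k) else 0) (code_proj n (n - k) U)"
proof -
  define N :: nat where "N = 2 ^ n"
  define m where "m = n - k"
  define P where "P = code_proj n m U"
  have Peq: "P = scl (1 / 2 ^ m) (opsum (Gc m) U)" unfolding P_def by (rule code_proj_eq)
  have Pop: "is_op N P" unfolding Peq N_def
    by (rule is_op_scl_opsum) (use U_pauli pauli_is_op m_def in auto)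
  have triv_id: "Uh (triv m) = idop N"
  proof -
    have tt: "(\<lambda>h. triv m h * triv m h) = triv m" unfolding triv_def by auto
    have t: "triv m \<in> chars m" by (rule triv_chars)
    have idem: "Uh (triv m) = mmul N (Uh (triv m)) (Uh (triv m))"
      using Uh_hom t tt unfolding m_def N_def by metis
    have un: "unitary_op N (Uh (triv m))" using Uh_unitary t unfolding m_def N_def by auto
    have "idop N = mmul N (adj (Uh (triv m))) (Uh (triv m))" using un unfolding unitary_op_def by simp
    also have "\<dots> = mmul N (adj (Uh (triv m))) (mmul N (Uh (triv m)) (Uh (triv m)))" using idem by simp
    also have "\<dots> = mmul N (idop N) (Uh (triv m))"
      by (subst mmul_assoc[symmetric]) (use un in \<open>simp add: unitary_op_def\<close>)
    also have "\<dots> = Uh (triv m)" using un unfolding unitary_op_def by (simp add: mmul_id_left)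
    finally show ?thesis by simp
  qed
  have UP: "mmul N (U h) P = P" if h: "h \<in> Gc m" for h
  proof -
    have b: "bij_betw (\<lambda>h'. symd h h') (Gc m) (Gc m)"
      by (rule bij_betw_byWitness[where f'="\<lambda>h'. symd h h'"]) (auto simp: symd_Gc h symd_invol)
    have "mmul N (U h) P = scl (1 / 2 ^ m) (opsum (Gc m) (\<lambda>h'. mmul N (U h) (U h')))"
      unfolding Peq by (simp add: mmul_scl_right mmul_opsum_right)
    also have "opsum (Gc m) (\<lambda>h'. mmul N (U h) (U h')) = opsum (Gc m) (\<lambda>h'. U (symd h h'))"
      by (rule opsum_cong) (use U_hom h in \<open>simp add: m_def N_def\<close>)
    also have "\<dots> = opsum (Gc m) U" by (rule opsum_reindex[OF b])
    finally show ?thesis unfolding Peq .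
  qed
  have A: "mmul N P (mmul N (Uh \<chi>) P) = scl (if \<chi> = triv m then 1 else 0) P"
    if c: "\<chi> \<in> chars m" for \<chi>
  proof -
    define X where "X = mmul N (Uh \<chi>) P"
    have "mmul N P X = scl (1 / 2 ^ m) (opsum (Gc m) (\<lambda>h. mmul N (U h) X))"
      unfolding Peq by (simp add: mmul_scl_left mmul_opsum_left)
    also have "opsum (Gc m) (\<lambda>h. mmul N (U h) X) = opsum (Gc m) (\<lambda>h. scl (\<chi> h) X)"
    proof (rule opsum_cong)
      fix h assume h: "h \<in> Gc m"
      have "mmul N (U h) X = mmul N (mmul N (U h) (Uh \<chi>)) P" unfolding X_def by (simp add: mmul_assoc)
      also have "\<dots> = mmul N (scl (\<chi> h) (mmul N (Uh \<chi>) (U h))) P"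
        using dual h c unfolding m_def N_def by simp
      also have "\<dots> = scl (\<chi> h) X" unfolding X_def by (simp add: mmul_scl_left mmul_assoc UP[OF h])
      finally show "mmul N (U h) X = scl (\<chi> h) X" .
    qed
    also have "\<dots> = scl (\<Sum>h\<in>Gc m. \<chi> h) X" by (rule opsum_scl_const)
    finally have "mmul N P X = scl (1 / 2 ^ m) (scl (if \<chi> = triv m then 2 ^ m else 0) X)"
      using sum_Gc_char[OF c] by simp
    then show ?thesis unfolding X_def
      by (cases "\<chi> = triv m") (simp_all add: scl_scl triv_id mmul_id_left Pop scl_zero scl_zop)
  qed
  define c :: complex where "c = 1 / 2 ^ m"
  have iso: "mmul N (iso_proj n m Uh g0) X = scl c (opsum (chars m) (\<lambda>\<chi>. scl (\<chi> g0) (mmul N (Uh \<chi>) X)))" for g0 X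
    unfolding iso_proj_eq c_def by (simp add: mmul_scl_left mmul_opsum_left)
  have inner: "mmul N P (mmul N (Uh \<chi>) (mmul N (Uh \<psi>) P)) = scl (if \<psi> = \<chi> then 1 else 0) P"
    if "\<chi> \<in> chars m" "\<psi> \<in> chars m" for \<chi> \<psi>
  proof -
    have "mmul N (Uh \<chi>) (mmul N (Uh \<psi>) P) = mmul N (Uh (\<lambda>h. \<chi> h * \<psi> h)) P"
      using Uh_hom that unfolding m_def N_def by (simp add: mmul_assoc)
    then show ?thesis using A[OF chars_prod[OF that]] chars_prod_triv[OF that] by simp
  qed
  have step1: "opsum (chars m) (\<lambda>\<chi>. scl (\<chi> g) (mmul N P (mmul N (Uh \<chi>) (mmul N (Uh \<psi>) P))))
      = scl (\<psi> g) P" if "\<psi> \<in> chars m" for \<psi>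
  proof -
    have "opsum (chars m) (\<lambda>\<chi>. scl (\<chi> g) (mmul N P (mmul N (Uh \<chi>) (mmul N (Uh \<psi>) P))))
       = opsum (chars m) (\<lambda>\<chi>. scl (if \<chi> = \<psi> then \<chi> g else 0) P)"
      by (rule opsum_cong) (auto simp add: inner that scl_scl)
    also have "\<dots> = scl (\<psi> g) P" using that finite_chars by (simp add: opsum_scl_const sum.delta)
    finally show ?thesis .
  qed
  have LHS: "mmul N P (mmul N (iso_proj n m Uh g) (mmul N (iso_proj n m Uh g') P))
      = scl (c * c * (\<Sum>\<chi>\<in>chars m. \<chi> g * \<chi> g')) P"
  proof -
    have "mmul N P (mmul N (iso_proj n m Uh g) (mmul N (iso_proj n m Uh g') P))
      = scl c (opsum (chars m) (\<lambda>\<psi>. scl (\<psi> g') (scl c (opsum (chars m) (\<lambda>\<chi>. scl (\<chi> g) (mmul N P (mmul N (Uh \<chi>) (mmul N (Uh \<psi>) P))))))))"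
      by (simp add: iso mmul_scl_left mmul_scl_right mmul_opsum_left mmul_opsum_right)
    also have "\<dots> = scl c (opsum (chars m) (\<lambda>\<chi>. scl (\<chi> g * c * \<chi> g') P))"
      by (rule arg_cong[where f="scl c"], rule opsum_cong) (simp add: step1 scl_scl mult_ac)
    also have "\<dots> = scl (c * c * (\<Sum>\<chi>\<in>chars m. \<chi> g * \<chi> g')) P"
      by (simp add: opsum_scl_const scl_scl sum_distrib_left sum_distrib_right mult_ac)
    finally show ?thesis .
  qed
  have S: "(\<Sum>\<chi>\<in>chars m. \<chi> g * \<chi> g') = (if g = g' then 2 ^ m else 0)"
  proof -
    have gm: "g \<in> Gc m" "g' \<in> Gc m" using \<open>g \<in> Gc (n - k)\<close> \<open>g' \<in> Gc (n - k)\<close> m_def by auto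
    have "(\<Sum>\<chi>\<in>chars m. \<chi> g * \<chi> g') = (\<Sum>\<chi>\<in>chars m. \<chi> (symd g g'))"
      by (rule sum.cong) (simp_all add: chars_mult gm)
    also have "\<dots> = (if g = g' then 2 ^ m else 0)"
    proof (cases "g = g'")
      case True
      have "(\<Sum>\<chi>\<in>chars m. \<chi> (symd g g')) = (\<Sum>\<chi>\<in>chars m. 1)"
        using True by (intro sum.cong) (simp_all add: chars_empty)
      then show ?thesis using True card_chars by simp
    next
      case False
      then have "symd g g' \<noteq> {}" unfolding symd_def by auto
      then show ?thesis using False sum_chars_el[OF symd_Gc[OF gm]] by simp
    qed
    finally show ?thesis .
  qed
  have "mmul N P (mmul N (iso_proj n m Uh g) (mmul N (iso_proj n m Uh g') P))
      = scl (if g = g' then 1 / 2 ^ m else 0) P"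
    unfolding LHS S c_def by (simp add: power2_eq_square[symmetric] power_divide, simp add: field_simps power2_eq_square)
  then show ?thesis unfolding P_def N_def m_def .
qed

end
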